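(* Let $\mathbb{X}$ be a Banach space, $\varphi:\mathbb{X}\to\mathbb{R}\cup\{+\infty\}$ a proper lower semicontinuous function, $\mathbf{S}_\varphi:=\{x\in\mathbb{X}:\varphi(x)\le0\}$, and $\bar x\in\mathbf{S}_\varphi$. (i) Suppose that $\mathbf{S}_\varphi$ has the Shapiro first order contact property around $\bar x$ and that the inequality $\varphi(x)\le0$ has a local error bound at $\bar x$. Then there exist $\tau,r\in(0,+\infty)$ such that $$\mathbf{e}\big(\{h\in\mathbb{X}:\varphi'_H(x;h)\le1\},\ \mathbf{T}^{\mathbf B}(\mathbf{S}_\varphi,x)\big)\le\tau \qquad(\ast)$$ holds for all $x\in\mathbf{S}_\varphi\cap\mathbf{B}(\bar x,r)$ with $\varphi(x)=0$. (ii) Suppose that ${\rm bd}(\mathbf{S}_\varphi)\subseteq\varphi^{-1}(0)$, that $\varphi$ has the epigraphical Shapiro first order contact property at $\bar x$, and that there exist $\tau,r\in(0,+\infty)$ such that $(\ast)$ holds for all $x\in{\rm bd}(\mathbf{S}_\varphi)\cap\mathbf{B}(\bar x,r)$. Then the inequality $\varphi(x)\le0$ has a local error bound at $\bar x$.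
   Context: $\mathbf{B}(a,\delta)$ is the open ball with center $a$ and radius $\delta$; ${\rm bd}$ denotes boundary; $\mathbf{d}(x,D):=\inf\{\|x-y\|:y\in D\}$. Excess: for $C,D\subseteq\mathbb{X}$, $\mathbf{e}(C,D):=\sup_{x\in C}\mathbf{d}(x,D)$, with $\mathbf{e}(\emptyset,D)=0$ if $D\ne\emptyset$ and $=\infty$ otherwise. Lower Hadamard directional derivative: $\varphi'_H(x;h):=\liminf_{t\to0^+,\,h'\to h}\frac{\varphi(x+th')-\varphi(x)}{t}$. For a closed set $C$ and $c\in C$, the Bouligand tangent cone $\mathbf{T}^{\mathbf B}(C,c)$ is the set of all $v$ for which there exist $v_n\to v$, $t_n\downarrow0$ with $c+t_nv_n\in C$ for all $n$. A closed set $C$ has the Shapiro first order contact property at $a\in C$ if for every $\varepsilon>0$ there is $\delta>0$ with $\mathbf{d}(x-u,\mathbf{T}^{\mathbf B}(C,u))\le\varepsilon\|x-u\|$ for all $x,u\in C\cap\mathbf{B}(a,\delta)$; it has this property around $\bar x$ if there is a neighborhood $U$ of $\bar x$ such that it has the property at every point of $C\cap U$. $\varphi$ has the epigraphical Shapiro first order contact property at $\bar x\in{\rm dom}\,\varphi$ if ${\rm epi}(\varphi)=\{(x,\alpha)\in\mathbb{X}\times\mathbb{R}:\varphi(x)\le\alpha\}$ (with norm $\|(x,\alpha)\|=\|x\|+|\alpha|$) has the Shapiro first order contact property at $(\bar x,\varphi(\bar x))$. The inequality $\varphi(x)\le0$ has a local error bound at $\bar x\in\mathbf{S}_\varphi$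 if there exist $\tau,\delta\in(0,+\infty)$ with $\mathbf{d}(x,\mathbf{S}_\varphi)\le\tau\max\{\varphi(x),0\}$ for all $x\in\mathbf{B}(\bar x,\delta)$. *)

theory Defs
  imports "HOL-Analysis.Analysis" "HOL-Library.Extended_Real"
begin

text \<open>Extended-real valued functions \<open>\<phi> : X \<Rightarrow> \<real> \<union> {+\<infinity>}\<close> are modelled as
  functions into ereal that never take the value \<open>-\<infinity>\<close>.\<close>

definition proper_fun :: "('a \<Rightarrow> ereal) \<Rightarrow> bool" where
  "proper_fun \<phi> \<longleftrightarrow> (\<forall>x. \<phi> x \<noteq> -\<infinity>) \<and> (\<exists>x. \<phi> x < \<infinity>)"

definition lsc_fun :: "('a::topological_space \<Rightarrow> ereal) \<Rightarrow> bool" where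
  "lsc_fun \<phi> \<longleftrightarrow> (\<forall>x. \<phi> x \<le> Liminf (at x) \<phi>)"

definition sublevel0 :: "('a \<Rightarrow> ereal) \<Rightarrow> 'a set" where
  "sublevel0 \<phi> = {x. \<phi> x \<le> 0}"

definition excess :: "'a::metric_space set \<Rightarrow> 'a set \<Rightarrow> ereal" where
  "excess C D = (if D = {} then \<infinity> else if C = {} then 0
                 else (SUP x\<in>C. ereal (infdist x D)))"

definition hadamard_lower :: "('a::real_normed_vector \<Rightarrow> ereal) \<Rightarrow> 'a \<Rightarrow> 'a \<Rightarrow> ereal" where
  "hadamard_lower \<phi> x h =
     Liminf (at (0, h) within ({0<..} \<times> UNIV))
       (\<lambda>(t::real, h'). (\<phi> (x + t *\<^sub>R h') - \<phi> x) / ereal t)"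

definition bouligand_cone :: "'a::real_normed_vector set \<Rightarrow> 'a \<Rightarrow> 'a set" where
  "bouligand_cone C c = {v. \<exists>vs ts. vs \<longlonglongrightarrow> v \<and> ts \<longlonglongrightarrow> 0 \<and> (\<forall>n. ts n > (0::real))
        \<and> (\<forall>n. c + ts n *\<^sub>R vs n \<in> C)}"

text \<open>Shapiro first order contact property at a point, with respect to a norm N
  (the tangent cone only depends on the topology, which is that of any equivalent norm).\<close>
definition shapiro_at_wrt :: "('a::real_normed_vector \<Rightarrow> real) \<Rightarrow> 'a set \<Rightarrow> 'a \<Rightarrow> bool" where
  "shapiro_at_wrt N C a \<longleftrightarrow>
     (\<forall>\<epsilon>>0. \<exists>\<delta>>0. \<forall>x\<in>C. \<forall>u\<in>C. N (x - a) < \<delta> \<longrightarrow> N (u - a) < \<delta> \<longrightarrow>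
        (INF v\<in>bouligand_cone C u. N (x - u - v)) \<le> \<epsilon> * N (x - u))"

abbreviation shapiro_at :: "'a::real_normed_vector set \<Rightarrow> 'a \<Rightarrow> bool" where
  "shapiro_at C a \<equiv> shapiro_at_wrt norm C a"

definition shapiro_around :: "'a::real_normed_vector set \<Rightarrow> 'a \<Rightarrow> bool" where
  "shapiro_around C a \<longleftrightarrow> (\<exists>U. open U \<and> a \<in> U \<and> (\<forall>u\<in>C \<inter> U. shapiro_at C u))"

definition epigraph :: "('a \<Rightarrow> ereal) \<Rightarrow> ('a \<times> real) set" where
  "epigraph \<phi> = {(x, \<alpha>). \<phi> x \<le> ereal \<alpha>}"

definition epi_shapiro_at :: "('a::real_normed_vector \<Rightarrow> ereal) \<Rightarrow> 'a \<Rightarrow> bool" where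
  "epi_shapiro_at \<phi> x0 \<longleftrightarrow>
     shapiro_at_wrt (\<lambda>(x, \<alpha>). norm x + \<bar>\<alpha>\<bar>) (epigraph \<phi>) (x0, real_of_ereal (\<phi> x0))"

definition local_error_bound :: "('a::real_normed_vector \<Rightarrow> ereal) \<Rightarrow> 'a \<Rightarrow> bool" where
  "local_error_bound \<phi> x0 \<longleftrightarrow>
     (\<exists>\<tau>>0. \<exists>\<delta>>0. \<forall>x\<in>ball x0 \<delta>.
        ereal (infdist x (sublevel0 \<phi>)) \<le> ereal \<tau> * max (\<phi> x) 0)"

end

theory Submission
  imports Defs
begin

lemma closed_sub:
  assumes "lsc_fun \<phi>" shows "closed (sublevel0 \<phi>)"
proof -
  have "open (- sublevel0 \<phi>)"
  proof (subst open_subopen, intro ballI)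
    fix x assume "x \<in> - sublevel0 \<phi>"
    hence "0 < \<phi> x" by (auto simp: sublevel0_def)
    also have "\<dots> \<le> Liminf (at x) \<phi>" using assms by (auto simp: lsc_fun_def)
    finally have "eventually (\<lambda>y. \<phi> y > 0) (at x)" by (rule less_LiminfD)
    then obtain T where T: "open T" "x \<in> T" "\<forall>y\<in>T. y \<noteq> x \<longrightarrow> \<phi> y > 0"
      unfolding eventually_at_topological by auto
    have "T \<subseteq> - sublevel0 \<phi>" using T \<open>0 < \<phi> x\<close> by (auto simp: sublevel0_def not_le)
    thus "\<exists>T. open T \<and> x \<in> T \<and> T \<subseteq> - sublevel0 \<phi>" using T by blast
  qed
  thus ?thesis by (simp add: closed_def)
qed

lemma bcone_zero:
  fixes C :: "'a::real_normed_vector set"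
  assumes "c \<in> C" shows "0 \<in> bouligand_cone C c"
  unfolding bouligand_cone_def
  apply (rule CollectI, rule exI[of _ "\<lambda>n. 0"], rule exI[of _ "\<lambda>n. inverse (real (Suc n))"])
  using assms LIMSEQ_inverse_real_of_nat by auto

lemma bcone_scale:
  fixes C :: "'a::real_normed_vector set"
  assumes "v \<in> bouligand_cone C c" "a > 0" shows "a *\<^sub>R v \<in> bouligand_cone C c"
proof -
  from assms obtain vs ts where h: "vs \<longlonglongrightarrow> v" "ts \<longlonglongrightarrow> 0" "\<forall>n. ts n > (0::real)"
        "\<forall>n. c + ts n *\<^sub>R vs n \<in> C" unfolding bouligand_cone_def by blast
  have "(\<lambda>n. a *\<^sub>R vs n) \<longlonglongrightarrow> a *\<^sub>R v" using h(1) by (intro tendsto_intros)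
  moreover have "(\<lambda>n. ts n / a) \<longlonglongrightarrow> 0" using h(2) tendsto_divide_zero by blast
  moreover have "\<forall>n. ts n / a > 0" using h(3) assms(2) by auto
  moreover have "\<forall>n. c + (ts n / a) *\<^sub>R (a *\<^sub>R vs n) \<in> C" using h(4) assms(2) by auto
  ultimately show ?thesis unfolding bouligand_cone_def by blast
qed

lemma ereal_div_le:
  assumes "t > 0" shows "(a / ereal t \<le> ereal c) \<longleftrightarrow> (a \<le> ereal (c * t))"
  using assms by (cases a) (auto simp: field_simps)

lemma epi_hadamard:
  fixes \<phi> :: "'a::real_normed_vector \<Rightarrow> ereal"
  assumes w0: "\<phi> w = 0" and kg: "(k, g) \<in> bouligand_cone (epigraph \<phi>) (w, 0)"
  shows "hadamard_lower \<phi> w k \<le> ereal g"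
proof (rule ccontr)
  assume "\<not> ?thesis"
  hence "ereal g < hadamard_lower \<phi> w k" by simp
  then obtain c where c: "ereal g < ereal c" "ereal c < hadamard_lower \<phi> w k"
    using ereal_dense2 by blast
  define G where "G = (\<lambda>(t::real, h'). (\<phi> (w + t *\<^sub>R h') - \<phi> w) / ereal t)"
  define F where "F = at (0::real, k) within ({0<..} \<times> UNIV)"
  have ev: "eventually (\<lambda>p. ereal c < G p) F"
    using c(2) unfolding hadamard_lower_def G_def F_def by (rule less_LiminfD)
  from kg obtain vs ts where h: "vs \<longlonglongrightarrow> (k, g)" "ts \<longlonglongrightarrow> 0" "\<forall>n. ts n > (0::real)"
        "\<forall>n. (w, 0) + ts n *\<^sub>R vs n \<in> epigraph \<phi>" unfolding bouligand_cone_def by blast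
  define ks where "ks = (\<lambda>n. fst (vs n))"
  define gs where "gs = (\<lambda>n. snd (vs n))"
  have ks: "ks \<longlonglongrightarrow> k" unfolding ks_def using tendsto_fst[OF h(1)] by simp
  have gs: "gs \<longlonglongrightarrow> g" unfolding gs_def using tendsto_snd[OF h(1)] by simp
  have lim: "filterlim (\<lambda>n. (ts n, ks n)) F sequentially"
    unfolding F_def filterlim_at using h(2,3) ks
    by (auto intro!: always_eventually tendsto_Pair) (metis less_irrefl)
  have ev2: "eventually (\<lambda>n. ereal c < G (ts n, ks n)) sequentially"
    using eventually_compose_filterlim[OF ev lim] .
  have ev3: "eventually (\<lambda>n. gs n < c) sequentially"
    using gs c(1) by (simp add: order_tendstoD(2))
  have le: "G (ts n, ks n) \<le> ereal (gs n)" for n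
  proof -
    have "\<phi> (w + ts n *\<^sub>R ks n) \<le> ereal (ts n * gs n)"
      using h(4)[rule_format, of n] by (simp add: epigraph_def ks_def gs_def case_prod_beta)
    thus ?thesis using h(3) by (simp add: G_def w0 ereal_div_le mult.commute)
  qed
  have "eventually (\<lambda>n. False) sequentially"
  proof (rule eventually_mono[OF eventually_conj[OF ev2 ev3]])
    fix n assume a: "ereal c < G (ts n, ks n) \<and> gs n < c"
    hence "ereal c < ereal (gs n)" using le[of n] by (meson order_less_le_trans)
    thus False using a by simp
  qed
  thus False by simp
qed

lemma small_inv:
  assumes "e > (0::real)" "\<eta> > 0" shows "\<exists>n. 2 / (\<eta> * real (Suc n)) < e"
proof -
  obtain n where n: "2 / (\<eta> * e) < real n" using reals_Archimedean2 by blast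
  have "2 / (\<eta> * e) < real (Suc n)" using n by simp
  hence "2 < real (Suc n) * (\<eta> * e)" using assms by (simp add: field_simps)
  hence "2 / (\<eta> * real (Suc n)) < e" using assms by (simp add: divide_less_eq mult.commute mult.left_commute)
  thus ?thesis by blast
qed

lemma ekeland_dist:
  fixes S :: "'a::{complete_space,real_normed_vector} set"
  assumes S: "closed S" and w0: "w0 \<in> S" and eta: "\<eta> > 0"
  shows "\<exists>w\<in>S. dist x w \<le> dist x w0 \<and> (\<forall>y\<in>S. dist x w \<le> dist x y + \<eta> * dist y w)"
proof -
  define f where "f = (\<lambda>y. dist x y)"
  define A where "A = (\<lambda>z. {y\<in>S. f y + \<eta> * dist y z \<le> f z})"
  have Aself: "z \<in> S \<Longrightarrow> z \<in> A z" for z by (simp add: A_def)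
  have Aclosed: "closed (A z)" for z
  proof -
    have "closed {y. f y + \<eta> * dist y z \<le> f z}" unfolding f_def
      by (intro closed_Collect_le continuous_intros)
    moreover have "A z = S \<inter> {y. f y + \<eta> * dist y z \<le> f z}" by (auto simp: A_def)
    ultimately show ?thesis using S by auto
  qed
  have Atrans: "y \<in> A z \<Longrightarrow> A y \<subseteq> A z" for y z
  proof
    fix u assume y: "y \<in> A z" and u: "u \<in> A y"
    have "dist u z \<le> dist u y + dist y z" by (rule dist_triangle)
    hence "f u + \<eta> * dist u z \<le> f u + \<eta> * dist u y + \<eta> * dist y z"
      using eta by (simp add: distrib_left[symmetric] mult_left_mono)
    also have "\<dots> \<le> f y + \<eta> * dist y z" using u by (simp add: A_def)
    also have "\<dots> \<le> f z" using y by (simp add: A_def)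
    finally show "u \<in> A z" using u by (simp add: A_def)
  qed
  have bdd: "bdd_below (f ` A z)" for z unfolding f_def by (rule bdd_belowI[of _ 0]) auto
  have ex: "z \<in> S \<Longrightarrow> \<exists>y. y \<in> A z \<and> f y < (INF u\<in>A z. f u) + inverse (real (Suc n))" for z n
  proof -
    assume z: "z \<in> S"
    have "(INF u\<in>A z. f u) < (INF u\<in>A z. f u) + inverse (real (Suc n))" by simp
    moreover have "A z \<noteq> {}" using Aself[OF z] by blast
    ultimately obtain y where "y \<in> A z" "f y < (INF u\<in>A z. f u) + inverse (real (Suc n))"
      using cINF_less_iff[of "A z" f, OF _ bdd] by blast
    thus ?thesis by blast
  qed
  define ws where "ws = rec_nat w0 (\<lambda>n z. SOME y. y \<in> A z \<and> f y < (INF u\<in>A z. f u) + inverse (real (Suc n)))"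
  have ws0: "ws 0 = w0" by (simp add: ws_def)
  have wsS: "ws (Suc n) = (SOME y. y \<in> A (ws n) \<and> f y < (INF u\<in>A (ws n). f u) + inverse (real (Suc n)))" for n
    by (simp add: ws_def)
  have inS: "ws n \<in> S" for n
  proof (induction n)
    case 0 then show ?case using w0 ws0 by simp
  next
    case (Suc n)
    from someI_ex[OF ex[OF Suc]] have "ws (Suc n) \<in> A (ws n)" unfolding wsS by blast
    thus ?case by (simp add: A_def)
  qed
  have step: "ws (Suc n) \<in> A (ws n) \<and> f (ws (Suc n)) < (INF u\<in>A (ws n). f u) + inverse (real (Suc n))" for n
    using someI_ex[OF ex[OF inS[of n]]] unfolding wsS by blast
  have dec: "m \<le> n \<Longrightarrow> A (ws n) \<subseteq> A (ws m)" for m n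
  proof -
    have "decseq (\<lambda>n. A (ws n))" using Atrans step by (intro decseq_SucI) blast
    thus "m \<le> n \<Longrightarrow> A (ws n) \<subseteq> A (ws m)" by (simp add: decseq_def)
  qed
  have diam: "u \<in> A (ws (Suc n)) \<Longrightarrow> \<eta> * dist u (ws (Suc n)) < inverse (real (Suc n))" for u n
  proof -
    assume u: "u \<in> A (ws (Suc n))"
    hence "u \<in> A (ws n)" using Atrans step by blast
    hence "(INF u\<in>A (ws n). f u) \<le> f u" using bdd[of "ws n"] by (simp add: cINF_lower)
    moreover have "f u + \<eta> * dist u (ws (Suc n)) \<le> f (ws (Suc n))" using u by (simp add: A_def)
    ultimately show ?thesis using step[of n] by linarith
  qed
  have diam2: "u \<in> A (ws (Suc n)) \<Longrightarrow> v \<in> A (ws (Suc n)) \<Longrightarrow> dist u v < 2 / (\<eta> * real (Suc n))" for u v n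
  proof -
    assume u: "u \<in> A (ws (Suc n))" and v: "v \<in> A (ws (Suc n))"
    have "\<eta> * dist u v \<le> \<eta> * dist u (ws (Suc n)) + \<eta> * dist v (ws (Suc n))"
      using dist_triangle3[of u v "ws (Suc n)"] eta by (simp add: distrib_left[symmetric] mult_left_mono dist_commute)
    also have "\<dots> < 2 * inverse (real (Suc n))" using diam[OF u] diam[OF v] by linarith
    finally have "\<eta> * dist u v * real (Suc n) < 2" using eta
      by (simp add: field_simps del: of_nat_Suc)
    moreover have "\<eta> * real (Suc n) > 0" using eta by simp
    ultimately show ?thesis by (simp add: less_divide_eq mult.commute mult.left_commute)
  qed
  obtain a where a: "\<And>n. a \<in> A (ws n)"
  proof (rule decreasing_closed_nest[of "\<lambda>n. A (ws n)"])
    show "closed (A (ws n))" for n by (rule Aclosed)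
    show "A (ws n) \<noteq> {}" for n using Aself[OF inS[of n]] by blast
    show "m \<le> n \<Longrightarrow> A (ws n) \<subseteq> A (ws m)" for m n by (rule dec)
    show "\<exists>n. \<forall>x\<in>A (ws n). \<forall>y\<in>A (ws n). dist x y < e" if epos: "e > 0" for e
    proof -
      obtain n where "2 / (\<eta> * real (Suc n)) < e" using small_inv[OF epos eta] by blast
      thus ?thesis using diam2[of _ n] by (intro exI[of _ "Suc n"]) (auto intro: less_trans)
    qed
  qed blast
  have aS: "a \<in> S" using a[of 0] by (simp add: A_def)
  have "f a \<le> f w0" using a[of 0] eta by (auto simp: A_def ws0 intro: order_trans[rotated] simp del: dist_commute)
  moreover have "\<forall>y\<in>S. f a \<le> f y + \<eta> * dist y a"
  proof (intro ballI, rule ccontr)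
    fix y assume y: "y \<in> S" and nl: "\<not> f a \<le> f y + \<eta> * dist y a"
    hence yA: "y \<in> A a" by (simp add: A_def)
    have "A a \<subseteq> A (ws n)" for n using Atrans a by blast
    hence small: "dist y a < 2 / (\<eta> * real (Suc n))" for n
      using diam2[of y n a] yA a by blast
    have "dist y a \<le> 0"
    proof (rule ccontr)
      assume "\<not> dist y a \<le> 0"
      then obtain n where "2 / (\<eta> * real (Suc n)) < dist y a" using small_inv eta by force
      thus False using small[of n] by linarith
    qed
    hence "y = a" by simp
    thus False using nl eta by simp
  qed
  ultimately show ?thesis using aS unfolding f_def by blast
qed

lemma infdist_lessE:
  assumes "A \<noteq> {}" "infdist x A < d" shows "\<exists>a\<in>A. dist x a < d"
proof -
  have "(INF a\<in>A. dist x a) < d" using assms by (simp add: infdist_notempty)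
  moreover have "bdd_below ((\<lambda>a. dist x a) ` A)" by (rule bdd_belowI[of _ 0]) auto
  ultimately show ?thesis using cINF_less_iff[OF assms(1)] by blast
qed

lemma part1:
  fixes \<phi> :: "'a::real_normed_vector \<Rightarrow> ereal"
  assumes xbar: "xbar \<in> sublevel0 \<phi>" and sh: "shapiro_around (sublevel0 \<phi>) xbar"
    and eb: "local_error_bound \<phi> xbar"
  shows "\<exists>\<tau>>0. \<exists>r>0. \<forall>x\<in>sublevel0 \<phi> \<inter> ball xbar r. \<phi> x = 0 \<longrightarrow>
              excess {h. hadamard_lower \<phi> x h \<le> 1} (bouligand_cone (sublevel0 \<phi>) x) \<le> ereal \<tau>"
proof -
  define S where "S = sublevel0 \<phi>"
  from sh obtain U where U: "open U" "xbar \<in> U" "\<forall>u\<in>S \<inter> U. shapiro_at S u"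
    unfolding shapiro_around_def S_def by blast
  from eb obtain \<tau>0 \<delta>0 where t0: "\<tau>0 > 0" "\<delta>0 > 0"
    and ebd: "\<forall>y\<in>ball xbar \<delta>0. ereal (infdist y S) \<le> ereal \<tau>0 * max (\<phi> y) 0"
    unfolding local_error_bound_def S_def by blast
  obtain \<rho> where rho: "\<rho> > 0" "ball xbar \<rho> \<subseteq> U" using U open_contains_ball by blast
  define r where "r = min \<rho> \<delta>0"
  define \<tau> where "\<tau> = 2 * \<tau>0 + 1"
  have Sne: "S \<noteq> {}" using xbar S_def by blast
  have key: "infdist h (bouligand_cone S x) \<le> \<tau>"
    if x: "x \<in> S" "x \<in> ball xbar r" "\<phi> x = 0" and h: "hadamard_lower \<phi> x h \<le> 1" for x h
  proof -
    define T where "T = bouligand_cone S x"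
    have T0: "0 \<in> T" unfolding T_def by (rule bcone_zero[OF x(1)])
    have "x \<in> U" using x(2) rho unfolding r_def by auto
    hence shx: "shapiro_at S x" using U(3) x(1) by blast
    define K where "K = norm h + 2 * \<tau>0 + 3"
    have Kpos: "K > 0" "K \<ge> norm h + 1" unfolding K_def using t0 norm_ge_zero[of h] by linarith+
    define \<epsilon>0 where "\<epsilon>0 = 1 / (8 * K)"
    have e0: "\<epsilon>0 > 0" using Kpos by (simp add: \<epsilon>0_def)
    obtain \<delta>s where ds: "\<delta>s > 0" and shp: "\<forall>y\<in>S. \<forall>u\<in>S. norm (y - x) < \<delta>s \<longrightarrow> norm (u - x) < \<delta>s \<longrightarrow>
        (INF v\<in>bouligand_cone S u. norm (y - u - v)) \<le> \<epsilon>0 * norm (y - u)"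
      using shx e0 unfolding shapiro_at_wrt_def by blast
    define m where "m = \<delta>0 - dist xbar x"
    have mpos: "m > 0" using x(2) by (simp add: m_def r_def)
    define e' where "e' = min (1/8) (min (m / K) (\<delta>s / K))"
    have e'pos: "e' > 0" using mpos ds Kpos by (simp add: e'_def)
    define G where "G = (\<lambda>(t::real, h'). (\<phi> (x + t *\<^sub>R h') - \<phi> x) / ereal t)"
    define F where "F = at (0::real, h) within ({0<..} \<times> UNIV)"
    have "\<not> eventually (\<lambda>p. G p > 3/2) F"
    proof
      assume "eventually (\<lambda>p. G p > 3/2) F"
      hence "eventually (\<lambda>p. 3/2 \<le> G p) F" by (rule eventually_mono) simp
      hence "3/2 \<le> Liminf F G" by (rule Liminf_bounded)
      also have "Liminf F G \<le> 1" using h unfolding hadamard_lower_def G_def F_def .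
      finally show False by simp
    qed
    then obtain p where p: "p \<in> {0<..} \<times> UNIV" "p \<noteq> (0, h)" "dist p (0, h) < e'" "\<not> G p > 3/2"
      unfolding F_def eventually_at using e'pos by blast
    obtain t h' where pth: "p = (t, h')" by (cases p)
    have tpos: "t > 0" using p(1) pth by auto
    have tle: "t < e'" using dist_fst_le[of p "(0,h)"] p(3) pth by (simp add: dist_real_def)
    have hh: "norm (h' - h) < e'" using dist_snd_le[of p "(0,h)"] p(3) pth by (simp add: dist_norm)
    have hnorm: "norm h' \<le> norm h + 1"
      using hh norm_triangle_ineq2[of h' h] by (simp add: e'_def)
    define y where "y = x + t *\<^sub>R h'"
    have Gle: "G (t, h') \<le> ereal (3/2)" using p(4) pth by (simp add: not_less)
    hence phiy: "\<phi> y \<le> ereal (3/2 * t)" using tpos by (simp add: G_def y_def x(3) ereal_div_le)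
    have th: "t * norm h' \<le> t * K" using tpos hnorm Kpos by (simp add: mult_left_mono)
    have "t * K < m" using tle Kpos by (simp add: e'_def less_divide_eq)
    have "dist xbar y \<le> dist xbar x + norm (t *\<^sub>R h')"
      unfolding y_def by (metis dist_norm dist_triangle2 add_diff_cancel_left' norm_minus_commute dist_add_cancel) 
    also have "\<dots> < \<delta>0"
    proof -
      have "norm (t *\<^sub>R h') = t * norm h'" using tpos by simp
      thus ?thesis using th \<open>t * K < m\<close> unfolding m_def by linarith
    qed
    finally have yb: "y \<in> ball xbar \<delta>0" by simp
    have "ereal (infdist y S) \<le> ereal \<tau>0 * max (\<phi> y) 0" using ebd yb by blast
    also have "\<dots> \<le> ereal \<tau>0 * ereal (3/2 * t)"
      using phiy tpos t0 by (intro ereal_mult_left_mono) (auto simp: max_def)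
    finally have idy: "infdist y S \<le> \<tau>0 * (3/2 * t)" by simp
    hence "infdist y S < (3/2 * \<tau>0 + 1/2) * t" using tpos by (simp add: algebra_simps)
    then obtain u where u: "u \<in> S" "dist y u < (3/2 * \<tau>0 + 1/2) * t" using infdist_lessE[OF Sne] by blast
    have "norm (u - x) \<le> norm (t *\<^sub>R h') + dist y u"
      unfolding y_def dist_norm by (metis add_diff_cancel_left' norm_diff_triangle_le norm_minus_commute order_refl diff_add_cancel add.commute)
    also have "\<dots> \<le> t * K"
    proof -
      have "t * norm h' \<le> t * (norm h + 1)" using tpos hnorm by (simp add: mult_left_mono)
      moreover have "norm (t *\<^sub>R h') = t * norm h'" using tpos by simp
      moreover have "\<tau>0 * t > 0" using tpos t0 by simp
      ultimately show ?thesis using u(2) tpos unfolding K_def by (simp add: algebra_simps abs_of_pos)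
    qed
    finally have ux: "norm (u - x) \<le> t * K" .
    have "t * K < \<delta>s" using tle Kpos by (simp add: e'_def less_divide_eq)
    hence "(INF v\<in>T. norm (u - x - v)) \<le> \<epsilon>0 * norm (u - x)"
      using shp u(1) x(1) ux ds unfolding T_def by force
    also have "\<dots> < \<epsilon>0 * norm (u - x) + t / 8" using tpos by simp
    finally have lt: "(INF v\<in>T. norm (u - x - v)) < \<epsilon>0 * norm (u - x) + t / 8" .
    have bddT: "bdd_below ((\<lambda>v. norm (u - x - v)) ` T)" by (rule bdd_belowI[of _ 0]) auto
    have "T \<noteq> {}" using T0 by blast
    then obtain v where v: "v \<in> T" "norm (u - x - v) < \<epsilon>0 * norm (u - x) + t / 8"
      using cINF_less_iff[OF _ bddT] lt by blast
    have vT: "(1/t) *\<^sub>R v \<in> T" using bcone_scale[of v S x "1/t"] v(1) tpos unfolding T_def by simp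
    have eq: "h - (1/t) *\<^sub>R v = (h - h') + (1/t) *\<^sub>R (y - u) + (1/t) *\<^sub>R (u - x - v)"
      using tpos by (simp add: y_def algebra_simps)
    have "norm (h - (1/t) *\<^sub>R v) \<le> norm (h - h') + norm ((1/t) *\<^sub>R (y - u)) + norm ((1/t) *\<^sub>R (u - x - v))"
      unfolding eq by (rule order_trans[OF norm_triangle_ineq add_right_mono[OF norm_triangle_ineq]])
    also have "\<dots> = norm (h - h') + norm (y - u) / t + norm (u - x - v) / t" using tpos by simp
    also have "\<dots> \<le> 1/8 + (3/2 * \<tau>0 + 1/2) + (1/8 + 1/8)"
    proof -
      have "norm (h - h') \<le> 1/8" using hh e'_def by (simp add: norm_minus_commute)
      moreover have "norm (y - u) / t \<le> 3/2 * \<tau>0 + 1/2" using u(2) tpos by (simp add: dist_norm divide_le_eq)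
      moreover have "norm (u - x - v) / t \<le> 1/8 + 1/8"
      proof -
        have "\<epsilon>0 * norm (u - x) \<le> \<epsilon>0 * (t * K)" using ux e0 by (simp add: mult_left_mono)
        also have "\<dots> = t / 8" using Kpos by (simp add: \<epsilon>0_def)
        finally have "norm (u - x - v) < t/8 + t/8" using v(2) by simp
        thus ?thesis using tpos by (simp add: divide_le_eq)
      qed
      ultimately show ?thesis by linarith
    qed
    also have "\<dots> \<le> \<tau>" using t0 by (simp add: \<tau>_def)
    finally have "dist h ((1/t) *\<^sub>R v) \<le> \<tau>" by (simp add: dist_norm)
    thus ?thesis using infdist_le2[OF vT] unfolding T_def by blast
  qed
  have tp: "\<tau> > 0" using t0 by (simp add: \<tau>_def)
  have rp: "r > 0" using rho t0 by (simp add: r_def)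
  have "\<forall>x\<in>sublevel0 \<phi> \<inter> ball xbar r. \<phi> x = 0 \<longrightarrow>
              excess {h. hadamard_lower \<phi> x h \<le> 1} (bouligand_cone (sublevel0 \<phi>) x) \<le> ereal \<tau>"
  proof (intro ballI impI)
    fix x assume x: "x \<in> sublevel0 \<phi> \<inter> ball xbar r" and x0: "\<phi> x = 0"
    have "bouligand_cone S x \<noteq> {}" using bcone_zero x S_def by blast
    thus "excess {h. hadamard_lower \<phi> x h \<le> 1} (bouligand_cone (sublevel0 \<phi>) x) \<le> ereal \<tau>"
      unfolding excess_def S_def[symmetric] using key x x0 tp S_def
      by (auto intro!: SUP_least)
  qed
  thus ?thesis using tp rp by blast
qed

lemma excess_le_infdist:
  assumes "excess H T \<le> ereal \<tau>" "T \<noteq> {}" "h \<in> H" shows "infdist h T \<le> \<tau>"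
proof -
  have "H \<noteq> {}" using assms(3) by blast
  hence "ereal (infdist h T) \<le> excess H T" using assms(2,3) unfolding excess_def
    by (auto intro: SUP_upper)
  hence "ereal (infdist h T) \<le> ereal \<tau>" using assms(1) by (rule order_trans)
  thus ?thesis by simp
qed

lemma part2_core:
  fixes \<phi> :: "'a::banach \<Rightarrow> ereal"
  assumes lsc: "lsc_fun \<phi>" and xb0: "\<phi> xbar = 0"
    and fr: "frontier (sublevel0 \<phi>) \<subseteq> \<phi> -` {0}" and esh: "epi_shapiro_at \<phi> xbar"
    and tp: "\<tau> > 0" and rp: "r > 0"
    and tst: "\<forall>x\<in>frontier (sublevel0 \<phi>) \<inter> ball xbar r.
              excess {h. hadamard_lower \<phi> x h \<le> 1} (bouligand_cone (sublevel0 \<phi>) x) \<le> ereal \<tau>"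
  shows "local_error_bound \<phi> xbar"
proof -
  define S where "S = sublevel0 \<phi>"
  have clS: "closed S" using closed_sub[OF lsc] by (simp add: S_def)
  have xbS: "xbar \<in> S" using xb0 by (simp add: S_def sublevel0_def)
  define M where "M = 16 * \<tau> + 1"
  define \<epsilon> where "\<epsilon> = 1 / (32 * (1 + \<tau>))"
  have Mp: "M \<ge> 1" "16 * \<tau> \<le> M" using tp by (auto simp: M_def)
  have ep: "\<epsilon> > 0" "3 * \<epsilon> \<le> 3/32" "8 * \<tau> * \<epsilon> \<le> 1/4" using tp
    by (auto simp: \<epsilon>_def field_simps)
  define N where "N = (\<lambda>(x::'a, a::real). norm x + \<bar>a\<bar>)"
  obtain \<delta>1 where d1: "\<delta>1 > 0" and shp: "\<forall>p\<in>epigraph \<phi>. \<forall>q\<in>epigraph \<phi>.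
        N (p - (xbar, 0)) < \<delta>1 \<longrightarrow> N (q - (xbar, 0)) < \<delta>1 \<longrightarrow>
        (INF v\<in>bouligand_cone (epigraph \<phi>) q. N (p - q - v)) \<le> \<epsilon> * N (p - q)"
    using esh ep(1) unfolding epi_shapiro_at_def shapiro_at_wrt_def N_def xb0 by fastforce
  define \<rho> where "\<rho> = min \<delta>1 r / 4"
  have rhop: "\<rho> > 0" "4 * \<rho> \<le> \<delta>1" "4 * \<rho> \<le> r" using d1 rp by (auto simp: \<rho>_def)
  have claim: "infdist x S \<le> M * \<alpha>"
    if x: "x \<in> ball xbar \<rho>" "\<phi> x = ereal \<alpha>" "0 < \<alpha>" "\<alpha> < \<delta>1 / 2" for x \<alpha>
  proof (rule ccontr)
    assume "\<not> ?thesis"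
    hence dM: "M * \<alpha> < infdist x S" by simp
    define d where "d = infdist x S"
    have "M * \<alpha> > 0" using Mp x(3) by simp
    hence dpos: "d > 0" using dM by (simp add: d_def)
    have dle: "d \<le> dist x xbar" using infdist_le[OF xbS] by (simp add: d_def)
    have Sne: "S \<noteq> {}" using xbS by blast
    obtain w0 where w0: "w0 \<in> S" "dist x w0 < 2 * d"
      using infdist_lessE[OF Sne, of x "2 * d"] dpos by (auto simp: d_def)
    obtain w where w: "w \<in> S" "dist x w \<le> dist x w0" and ek: "\<forall>y\<in>S. dist x w \<le> dist x y + 1/8 * dist y w"
      using ekeland_dist[OF clS w0(1), of "1/8" x] by auto
    define D where "D = dist x w"
    have dD: "d \<le> D" using infdist_le[OF w(1)] by (simp add: d_def D_def)
    have Dpos: "D > 0" using dD dpos by simp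
    have D2: "D < 2 * \<rho>" using w(2) w0(2) dle x(1) by (simp add: D_def dist_commute)
    have wb: "dist xbar w < 3 * \<rho>" using x(1) D2 dist_triangle[of xbar w x] by (simp add: D_def dist_commute)
    have wfr: "w \<in> frontier S"
    proof -
      have "w \<notin> interior S"
      proof
        assume "w \<in> interior S"
        then obtain e where e: "e > 0" "ball w e \<subseteq> S" using mem_interior by blast
        define t where "t = min (1/2) (e / (2 * D))"
        have t: "t > 0" "t \<le> 1/2" "t * D < e" using e Dpos
          by (auto simp: t_def min_def field_simps)
        define y where "y = w + t *\<^sub>R (x - w)"
        have "dist w y = t * D" by (simp add: y_def D_def dist_norm norm_minus_commute t(1) abs_of_pos)
        hence "y \<in> S" using e t by auto
        moreover have "dist x y = (1 - t) * D"
        proof -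
          have "x - y = (1 - t) *\<^sub>R (x - w)" by (simp add: y_def algebra_simps)
          thus ?thesis using t by (simp add: dist_norm D_def)
        qed
        ultimately have "D \<le> (1 - t) * D + 1/8 * (t * D)" using ek \<open>dist w y = t * D\<close>
          by (force simp: D_def dist_commute)
        hence "t * D \<le> 0" by (simp add: algebra_simps)
        thus False using mult_pos_pos[OF t(1) Dpos] by linarith
      qed
      thus ?thesis using w(1) clS by (simp add: frontier_def)
    qed
    hence w0': "\<phi> w = 0" using fr S_def by auto
    have pe: "(x, \<alpha>) \<in> epigraph \<phi>" using x(2) by (simp add: epigraph_def)
    have qe: "(w, 0) \<in> epigraph \<phi>" using w0' by (simp add: epigraph_def)
    have Np: "N ((x, \<alpha>) - (xbar, 0)) < \<delta>1"
      using x rhop by (simp add: N_def dist_norm norm_minus_commute)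
    have Nq: "N ((w, 0) - (xbar, 0)) < \<delta>1"
      using wb rhop by (simp add: N_def dist_norm norm_minus_commute)
    define TE where "TE = bouligand_cone (epigraph \<phi>) (w, 0)"
    have TE0: "0 \<in> TE" unfolding TE_def by (rule bcone_zero[OF qe])
    have "(INF v\<in>TE. N ((x, \<alpha>) - (w, 0) - v)) \<le> \<epsilon> * N ((x, \<alpha>) - (w, 0))"
      using shp pe qe Np Nq unfolding TE_def by blast
    also have "\<dots> = \<epsilon> * (D + \<alpha>)" using x(3) by (simp add: N_def D_def dist_norm)
    also have "\<dots> < \<epsilon> * (D + \<alpha>) + \<epsilon> * D" using ep Dpos by simp
    finally have lt: "(INF v\<in>TE. N ((x, \<alpha>) - (w, 0) - v)) < \<epsilon> * (D + \<alpha>) + \<epsilon> * D" .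
    have bddT: "bdd_below ((\<lambda>v. N ((x, \<alpha>) - (w, 0) - v)) ` TE)"
      by (rule bdd_belowI[of _ 0]) (auto simp: N_def)
    have "TE \<noteq> {}" using TE0 by blast
    then obtain kg where kg: "kg \<in> TE" "N ((x, \<alpha>) - (w, 0) - kg) < \<epsilon> * (D + \<alpha>) + \<epsilon> * D"
      using cINF_less_iff[OF _ bddT] lt by blast
    obtain k g where kgp: "kg = (k, g)" by (cases kg)
    have kgb: "norm (x - w - k) + \<bar>\<alpha> - g\<bar> < \<epsilon> * (D + \<alpha>) + \<epsilon> * D"
      using kg(2) kgp by (simp add: N_def)
    have aD: "\<alpha> \<le> D / M" using dM dD Mp by (simp add: d_def[symmetric] le_divide_eq mult.commute)
    have "D * 1 \<le> D * M" using mult_left_mono[OF Mp(1), of D] Dpos by simp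
    hence "D / M \<le> D" using Mp by (simp add: divide_le_eq)
    hence aD1: "\<alpha> \<le> D" using aD by linarith
    have eD: "\<epsilon> * \<alpha> \<le> \<epsilon> * D" using aD1 ep(1) by (simp add: mult_left_mono)
    define \<gamma> where "\<gamma> = \<alpha> + 4 * \<epsilon> * D"
    have gp: "\<gamma> > 0" using x(3) mult_pos_pos[OF ep(1) Dpos] unfolding \<gamma>_def by linarith
    have gle: "g \<le> \<gamma>"
    proof -
      have "\<epsilon> * (D + \<alpha>) = \<epsilon> * D + \<epsilon> * \<alpha>" by (simp add: distrib_left)
      moreover have "- (\<alpha> - g) \<le> \<bar>\<alpha> - g\<bar>" by (rule abs_ge_minus_self)
      moreover have "0 \<le> norm (x - w - k)" by simp
      moreover have "4 * \<epsilon> * D = \<epsilon> * D + \<epsilon> * D + \<epsilon> * D + \<epsilon> * D" by simp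
      ultimately show ?thesis using kgb eD unfolding \<gamma>_def by linarith
    qed
    have "(1/\<gamma>) *\<^sub>R (k, g) \<in> TE" using bcone_scale[of "(k,g)" "epigraph \<phi>" "(w,0)" "1/\<gamma>"] kg(1) kgp gp
      unfolding TE_def by simp
    hence "((1/\<gamma>) *\<^sub>R k, g / \<gamma>) \<in> bouligand_cone (epigraph \<phi>) (w, 0)" by (simp add: TE_def)
    hence "hadamard_lower \<phi> w ((1/\<gamma>) *\<^sub>R k) \<le> ereal (g / \<gamma>)" by (rule epi_hadamard[where \<phi>=\<phi> and w=w, OF w0'])
    also have "\<dots> \<le> 1" using gle gp by simp
    finally have hH: "(1/\<gamma>) *\<^sub>R k \<in> {h. hadamard_lower \<phi> w h \<le> 1}" by simp
    define T where "T = bouligand_cone S w"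
    have T0: "0 \<in> T" unfolding T_def by (rule bcone_zero[OF w(1)])
    have "w \<in> ball xbar r" using wb rhop by simp
    hence "excess {h. hadamard_lower \<phi> w h \<le> 1} T \<le> ereal \<tau>" using tst wfr unfolding T_def S_def by blast
    hence "infdist ((1/\<gamma>) *\<^sub>R k) T \<le> \<tau>" using excess_le_infdist T0 hH by blast
    hence "infdist ((1/\<gamma>) *\<^sub>R k) T < 2 * \<tau>" using tp by simp
    then obtain v' where v': "v' \<in> T" "dist ((1/\<gamma>) *\<^sub>R k) v' < 2 * \<tau>" using infdist_lessE T0 by blast
    define v where "v = \<gamma> *\<^sub>R v'"
    have vT: "v \<in> T" using bcone_scale[OF _ gp] v'(1) unfolding v_def T_def by blast
    have "k - v = \<gamma> *\<^sub>R ((1/\<gamma>) *\<^sub>R k - v')" using gp by (simp add: v_def algebra_simps)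
    hence "norm (k - v) = \<gamma> * dist ((1/\<gamma>) *\<^sub>R k) v'" using gp by (simp add: dist_norm)
    also have "\<dots> \<le> \<gamma> * (2 * \<tau>)" using v'(2) gp by (simp add: mult_left_mono)
    finally have kv: "norm (k - v) \<le> 2 * \<tau> * \<alpha> + 8 * \<tau> * \<epsilon> * D" by (simp add: \<gamma>_def algebra_simps)
    have "norm (x - w - v) \<le> norm (x - w - k) + norm (k - v)"
      using norm_triangle_ineq[of "x - w - k" "k - v"] by simp
    also have "\<dots> \<le> 3 * \<epsilon> * D + 2 * \<tau> * \<alpha> + 8 * \<tau> * \<epsilon> * D" 
    proof -
      have "\<epsilon> * (D + \<alpha>) = \<epsilon> * D + \<epsilon> * \<alpha>" by (simp add: distrib_left)
      moreover have "0 \<le> \<bar>\<alpha> - g\<bar>" by simp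
      moreover have "3 * \<epsilon> * D = \<epsilon> * D + \<epsilon> * D + \<epsilon> * D" by simp
      ultimately show ?thesis using kgb kv eD by linarith
    qed
    also have "\<dots> \<le> D / 2"
    proof -
      have "3 * \<epsilon> * D \<le> 3/32 * D" using ep(2) Dpos by (simp add: mult_right_mono)
      moreover have "8 * \<tau> * \<epsilon> * D \<le> 1/4 * D" using ep(3) Dpos by (simp add: mult_right_mono)
      moreover have "2 * \<tau> * \<alpha> \<le> D / 8"
      proof -
        have "2 * \<tau> * \<alpha> \<le> 2 * \<tau> * (D / M)" using aD tp by (intro mult_left_mono) auto
        also have "\<dots> = (16 * \<tau> * D) / M / 8" by simp
        also have "\<dots> \<le> (M * D) / M / 8"
        proof -
          have m1: "16 * \<tau> * D \<le> M * D" using mult_right_mono[OF Mp(2), of D] Dpos by simp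
          show ?thesis using m1 Mp by (intro divide_right_mono) auto
        qed
        also have "\<dots> = D / 8" using Mp by simp
        finally show ?thesis .
      qed
      ultimately show ?thesis using Dpos by linarith
    qed
    finally have xwv: "norm (x - w - v) \<le> D / 2" .
    from vT obtain vs ts where sq: "vs \<longlonglongrightarrow> v" "ts \<longlonglongrightarrow> 0" "\<forall>n. ts n > (0::real)"
        "\<forall>n. w + ts n *\<^sub>R vs n \<in> S" unfolding T_def bouligand_cone_def by blast
    have "eventually (\<lambda>n. dist (vs n) v < D / 8) sequentially" using sq(1) Dpos
      unfolding tendsto_iff by (meson zero_less_divide_iff zero_less_numeral)
    moreover have "eventually (\<lambda>n. ts n < 1) sequentially" using sq(2) by (simp add: order_tendstoD(2))
    ultimately obtain n where n: "dist (vs n) v < D / 8" "ts n < 1"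
      using eventually_happens'[OF sequentially_bot] eventually_conj by (metis (mono_tags, lifting))
    define t where "t = ts n"
    have t: "t > 0" "t < 1" using sq(3) n(2) by (auto simp: t_def)
    define y where "y = w + t *\<^sub>R vs n"
    have yS: "y \<in> S" using sq(4) by (simp add: y_def t_def)
    have eky: "D \<le> dist x y + 1/8 * dist y w" using ek yS by (simp add: D_def)
    have xyeq: "x - y = (1 - t) *\<^sub>R (x - w) + t *\<^sub>R (x - w - v) + t *\<^sub>R (v - vs n)"
      by (simp add: y_def algebra_simps)
    have "dist x y \<le> norm ((1 - t) *\<^sub>R (x - w)) + norm (t *\<^sub>R (x - w - v)) + norm (t *\<^sub>R (v - vs n))"
      using norm_triangle_ineq[of "(1 - t) *\<^sub>R (x - w) + t *\<^sub>R (x - w - v)" "t *\<^sub>R (v - vs n)"]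
        norm_triangle_ineq[of "(1 - t) *\<^sub>R (x - w)" "t *\<^sub>R (x - w - v)"]
      unfolding dist_norm xyeq by linarith
    also have "\<dots> = (1 - t) * D + t * norm (x - w - v) + t * norm (v - vs n)"
      using t by (simp add: D_def dist_norm)
    also have "\<dots> \<le> (1 - t) * D + t * (D/2) + t * (D/8)"
      using t xwv n(1) by (intro add_mono mult_left_mono) (auto simp: dist_norm norm_minus_commute)
    finally have dxy: "dist x y \<le> (1 - t) * D + t * (D/2) + t * (D/8)" .
    have nv: "norm v \<le> D + D / 2"
      using norm_triangle_ineq[of "x - w" "v - (x - w)"] xwv by (simp add: D_def dist_norm norm_minus_commute)
    have "norm (vs n) \<le> norm v + D / 8"
      using norm_triangle_ineq[of v "vs n - v"] n(1) by (simp add: dist_norm)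
    hence nvs: "norm (vs n) \<le> 13/8 * D" using nv by simp
    have "dist y w = t * norm (vs n)" using t by (simp add: y_def dist_norm)
    also have "\<dots> \<le> t * (13/8 * D)" using nvs t by (simp add: mult_left_mono)
    finally have dyw: "dist y w \<le> t * (13/8 * D)" .
    have "D \<le> (1 - t) * D + t * (D/2) + t * (D/8) + 1/8 * (t * (13/8 * D))"
      using eky dxy dyw by linarith
    hence "t * D \<le> 0" by (simp add: algebra_simps)
    thus False using mult_pos_pos[OF t(1) Dpos] by linarith
  qed
  define \<tau>' where "\<tau>' = M + 2 * \<rho> / \<delta>1"
  have "2 * \<rho> / \<delta>1 > 0" using rhop d1 by simp
  hence tp': "\<tau>' > 0" using Mp unfolding \<tau>'_def by linarith
  have "\<forall>x\<in>ball xbar \<rho>. ereal (infdist x (sublevel0 \<phi>)) \<le> ereal \<tau>' * max (\<phi> x) 0"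
  proof
    fix x assume xb: "x \<in> ball xbar \<rho>"
    show "ereal (infdist x (sublevel0 \<phi>)) \<le> ereal \<tau>' * max (\<phi> x) 0"
    proof (cases "\<phi> x \<le> 0")
      case True
      hence "x \<in> sublevel0 \<phi>" by (simp add: sublevel0_def)
      thus ?thesis using True by (simp add: max_def)
    next
      case False
      show ?thesis
      proof (cases "\<phi> x")
        case (real \<alpha>)
        have ap: "\<alpha> > 0" using False real by simp
        have "infdist x S \<le> \<tau>' * \<alpha>"
        proof (cases "\<alpha> < \<delta>1 / 2")
          case True
          have "infdist x S \<le> M * \<alpha>" using claim[OF xb real ap True] .
          also have "\<dots> \<le> \<tau>' * \<alpha>" using ap rhop d1 by (simp add: \<tau>'_def mult_right_mono)
          finally show ?thesis .
        next
          case False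
          have "infdist x S \<le> dist x xbar" by (rule infdist_le[OF xbS])
          also have "\<dots> < \<rho>" using xb by (simp add: dist_commute)
          also have "\<rho> = (2 * \<rho> / \<delta>1) * (\<delta>1 / 2)" using d1 by simp
          also have "\<dots> \<le> (2 * \<rho> / \<delta>1) * \<alpha>" using False rhop d1 by (intro mult_left_mono) auto
          also have "\<dots> \<le> \<tau>' * \<alpha>" using ap Mp unfolding \<tau>'_def by (intro mult_right_mono) auto
          finally show ?thesis by simp
        qed
        thus ?thesis using real ap by (simp add: S_def max_def)
      next
        case PInf thus ?thesis using tp' by simp
      next
        case MInf thus ?thesis using False by simp
      qed
    qed
  qed
  thus ?thesis unfolding local_error_bound_def using tp' rhop by blast
qed

theorem theorem4p1:
  fixes \<phi> :: "'a::banach \<Rightarrow> ereal" and xbar :: 'a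
  assumes proper: "proper_fun \<phi>" and lsc: "lsc_fun \<phi>"
    and xbar: "xbar \<in> sublevel0 \<phi>"
  shows "(shapiro_around (sublevel0 \<phi>) xbar \<and> local_error_bound \<phi> xbar \<longrightarrow>
           (\<exists>\<tau>>0. \<exists>r>0. \<forall>x\<in>sublevel0 \<phi> \<inter> ball xbar r. \<phi> x = 0 \<longrightarrow>
              excess {h. hadamard_lower \<phi> x h \<le> 1} (bouligand_cone (sublevel0 \<phi>) x) \<le> ereal \<tau>))
       \<and> (frontier (sublevel0 \<phi>) \<subseteq> \<phi> -` {0} \<and> epi_shapiro_at \<phi> xbar \<and>
           (\<exists>\<tau>>0. \<exists>r>0. \<forall>x\<in>frontier (sublevel0 \<phi>) \<inter> ball xbar r.
              excess {h. hadamard_lower \<phi> x h \<le> 1} (bouligand_cone (sublevel0 \<phi>) x) \<le> ereal \<tau>)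
           \<longrightarrow> local_error_bound \<phi> xbar)"
proof (intro conjI impI)
  assume "shapiro_around (sublevel0 \<phi>) xbar \<and> local_error_bound \<phi> xbar"
  thus "\<exists>\<tau>>0. \<exists>r>0. \<forall>x\<in>sublevel0 \<phi> \<inter> ball xbar r. \<phi> x = 0 \<longrightarrow>
              excess {h. hadamard_lower \<phi> x h \<le> 1} (bouligand_cone (sublevel0 \<phi>) x) \<le> ereal \<tau>"
    using part1[OF xbar] by blast
next
  assume a: "frontier (sublevel0 \<phi>) \<subseteq> \<phi> -` {0} \<and> epi_shapiro_at \<phi> xbar \<and>
           (\<exists>\<tau>>0. \<exists>r>0. \<forall>x\<in>frontier (sublevel0 \<phi>) \<inter> ball xbar r.
              excess {h. hadamard_lower \<phi> x h \<le> 1} (bouligand_cone (sublevel0 \<phi>) x) \<le> ereal \<tau>)"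
  then obtain \<tau> r where tp: "\<tau> > 0" and rp: "r > 0" and tst: "\<forall>x\<in>frontier (sublevel0 \<phi>) \<inter> ball xbar r.
              excess {h. hadamard_lower \<phi> x h \<le> 1} (bouligand_cone (sublevel0 \<phi>) x) \<le> ereal \<tau>"
    by blast
  have clS: "closed (sublevel0 \<phi>)" by (rule closed_sub[OF lsc])
  show "local_error_bound \<phi> xbar"
  proof (cases "xbar \<in> frontier (sublevel0 \<phi>)")
    case True
    hence "\<phi> xbar = 0" using a by auto
    thus ?thesis using part2_core[OF lsc _ _ _ tp rp tst] a by blast
  next
    case False
    hence "xbar \<in> interior (sublevel0 \<phi>)" using xbar clS by (simp add: frontier_def)
    then obtain e where e: "e > 0" "ball xbar e \<subseteq> sublevel0 \<phi>" using mem_interior by blast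
    have "\<forall>x\<in>ball xbar e. ereal (infdist x (sublevel0 \<phi>)) \<le> ereal 1 * max (\<phi> x) 0"
    proof
      fix x assume "x \<in> ball xbar e"
      hence "infdist x (sublevel0 \<phi>) = 0" using e by auto
      moreover have "ereal 0 \<le> max (\<phi> x) 0" using max.cobounded2[of 0 "\<phi> x"] by (simp add: zero_ereal_def)
      ultimately show "ereal (infdist x (sublevel0 \<phi>)) \<le> ereal 1 * max (\<phi> x) 0" by simp
    qed
    thus ?thesis unfolding local_error_bound_def using e(1) by (intro exI[of _ 1]) auto
  qed
qed

end
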